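(* Let $\delta>0$ and let $A,B,C,D$ be nonnegative constants with $A\in(0,1)$ and $C>0$. Then there exists a function $\varphi\in C^2((0,\delta])\cap C([0,\delta])$, depending on $A,B,C,D,\delta$, which is positive on $(0,\delta]$, solves $$\varphi''(r)+\Big(\frac{A}{r}+B\Big)\varphi'(r)=-C\qquad\text{for } r\in(0,\delta],$$ and satisfies: (i) $\varphi'(r)>0$ and $\varphi''(r)<0$ for all $r\in(0,\delta]$; (ii) $\varphi''(r)-\dfrac{\varphi'(r)}{r}\le -C$ for all $r\in(0,\delta]$; (iii) $\varphi(\delta)\ge D$; (iv) $\displaystyle\sup_{0<r\le\delta}\frac{\varphi(r)}{r^{1-A}}<+\infty$. *)

theory Defs
  imports "HOL-Analysis.Analysis"
begin

end

theory Submission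
  imports Defs
begin

theorem lemma2p1:
  fixes \<delta> A B C D :: real
  assumes "\<delta> > 0" and "0 < A" and "A < 1" and "B \<ge> 0" and "C > 0" and "D \<ge> 0"
  shows "\<exists>\<phi> \<phi>1 \<phi>2 :: real \<Rightarrow> real.
           continuous_on {0..\<delta>} \<phi> \<and>
           (\<forall>r\<in>{0<..\<delta>}. (\<phi> has_real_derivative \<phi>1 r) (at r within {0<..\<delta>}) \<and>
                           (\<phi>1 has_real_derivative \<phi>2 r) (at r within {0<..\<delta>})) \<and>
           continuous_on {0<..\<delta>} \<phi>2 \<and>
           (\<forall>r\<in>{0<..\<delta>}. \<phi> r > 0) \<and>
           (\<forall>r\<in>{0<..\<delta>}. \<phi>2 r + (A / r + B) * \<phi>1 r = - C) \<and>
           (\<forall>r\<in>{0<..\<delta>}. \<phi>1 r > 0 \<and> \<phi>2 r < 0) \<and>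
           (\<forall>r\<in>{0<..\<delta>}. \<phi>2 r - \<phi>1 r / r \<le> - C) \<and>
           \<phi> \<delta> \<ge> D \<and>
           bdd_above ((\<lambda>r. \<phi> r / r powr (1 - A)) ` {0<..\<delta>})"
proof -
  note d0 = assms(1) and A0 = assms(2) and A1 = assms(3) and B0 = assms(4) and C0 = assms(5) and D0 = assms(6)
  define p where "p = 1 / (1 - A)"
  have p0: "p > 0" and p1: "p * (1 - A) = 1" using A1 by (auto simp: p_def)
  define T2 where "T2 = \<delta> powr (1 - A) + 1"
  define T1 where "T1 = T2 powr p"
  have dpp: "(x powr (1 - A)) powr p = x" if "x \<ge> 0" for x :: real
    using p1 that by (simp add: powr_powr mult.commute)
  have T2pos: "T2 > 0" unfolding T2_def by (smt (verit) powr_ge_zero)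
  have dT1: "\<delta> < T1"
  proof -
    have "(\<delta> powr (1 - A)) powr p < T2 powr p"
      by (rule powr_less_mono2) (use p0 in \<open>auto simp: T2_def\<close>)
    then show ?thesis using dpp[of \<delta>] d0 less_imp_le[OF d0] by (simp add: T1_def)
  qed
  define f where "f s = s powr A * exp (B * s)" for s :: real
  define F where "F r = integral {0..r} f" for r
  have fcont: "continuous_on {0..T1} f"
    unfolding f_def using A0
    by (intro continuous_intros continuous_on_powr') auto
  have fnn: "f s \<ge> 0" for s unfolding f_def by simp
  have Fwithin: "(F has_real_derivative f r) (at r within {0..T1})" if "r \<in> {0..T1}" for r
    unfolding F_def by (rule integral_has_real_derivative[OF fcont that])
  have Fder: "(F has_real_derivative f r) (at r)" if "r \<in> {0<..<T1}" for r
    using Fwithin[of r] that at_within_interior[of r "{0..T1}"] by auto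
  have Fcont: "continuous_on {0..T1} F"
    using Fwithin DERIV_continuous continuous_on_eq_continuous_within by blast
  have Fmono: "F s \<le> F s'" if "0 \<le> s" "s \<le> s'" "s' \<le> T1" for s s'
  proof -
    have s1: "s \<le> T1" using that by linarith
    have i: "f integrable_on {0..t}" if "t \<le> T1" for t
      by (rule integrable_continuous_interval) (use continuous_on_subset[OF fcont] that in auto)
    show ?thesis unfolding F_def
      by (rule integral_subset_le) (use that fnn i[OF s1] i[OF that(3)] in \<open>auto simp del: atLeastAtMost_iff\<close>)
  qed
  have Fnn: "F s \<ge> 0" for s
  proof (cases "f integrable_on {0..s}")
    case True
    then show ?thesis unfolding F_def by (rule integral_nonneg) (auto simp: fnn)
  next
    case False
    then show ?thesis unfolding F_def by (simp add: not_integrable_integral)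
  qed
  define K where "K = C * F \<delta> + 1 + D * exp (B * \<delta>) / (p * \<delta> powr (1 - A))"
  define g where "g r = exp (- B * r) * (K - C * F r)" for r
  define m where "m = exp (- B * \<delta>) * (1 + D * exp (B * \<delta>) / (p * \<delta> powr (1 - A)))"
  have m0: "m > 0" unfolding m_def using p0 d0 D0 by (intro mult_pos_pos add_pos_nonneg) auto
  have mD: "m * (p * \<delta> powr (1 - A)) \<ge> D"
  proof -
    have "m * (p * \<delta> powr (1 - A)) = exp (- B * \<delta>) * (p * \<delta> powr (1 - A)) + D"
      unfolding m_def using p0 d0 by (simp add: field_simps exp_minus)
    then show ?thesis using p0 d0 by (smt (verit) exp_gt_zero mult_pos_pos powr_gt_zero)
  qed
  have gcont: "continuous_on {0..T1} g"
    unfolding g_def by (intro continuous_intros Fcont)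
  have gder: "(g has_real_derivative (- B * g r - C * r powr A)) (at r)" if "r \<in> {0<..<T1}" for r
  proof -
    have "(g has_real_derivative (- B * exp (- B * r) * (K - C * F r) + exp (- B * r) * (- C * f r))) (at r)"
      unfolding g_def
      by (auto intro!: derivative_eq_intros Fder[OF that])
    moreover have "- B * exp (- B * r) * (K - C * F r) + exp (- B * r) * (- C * f r) = - B * g r - C * r powr A"
      unfolding g_def f_def by (simp add: algebra_simps mult_exp_exp)
    ultimately show ?thesis by simp
  qed
  have gm: "g s \<ge> m" if "0 \<le> s" "s \<le> \<delta>" for s
  proof -
    have "F s \<le> F \<delta>" using Fmono[of s \<delta>] that dT1 by auto
    then have a: "K - C * F s \<ge> 1 + D * exp (B * \<delta>) / (p * \<delta> powr (1 - A))"
      unfolding K_def using C0 by (smt (verit) mult_left_mono)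
    have b: "exp (- B * s) \<ge> exp (- B * \<delta>)" using that B0 by (simp add: mult_left_mono)
    have c: "0 \<le> 1 + D * exp (B * \<delta>) / (p * \<delta> powr (1 - A))" using p0 d0 D0 by simp
    show ?thesis unfolding m_def g_def
      by (rule mult_mono[OF b a]) (use c a in auto)
  qed
  have gK: "g s \<le> K" if "0 \<le> s" "s \<le> \<delta>" for s
  proof -
    have a: "K - C * F s \<le> K" using C0 Fnn[of s] by simp
    have a2: "K - C * F s \<ge> 0" using gm[OF that] m0 unfolding g_def
      by (smt (verit) exp_gt_zero mult_pos_neg)
    have b: "exp (- B * s) \<le> 1" using that B0 by simp
    have "g s \<le> 1 * K" unfolding g_def by (rule mult_mono[OF b a]) (use a2 in auto)
    then show ?thesis by simp
  qed
  define \<phi>1 where "\<phi>1 r = r powr (- A) * g r" for r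
  define \<phi>2 where "\<phi>2 r = - C - (A / r + B) * \<phi>1 r" for r
  have \<phi>1der: "(\<phi>1 has_real_derivative \<phi>2 r) (at r)" if "r \<in> {0<..\<delta>}" for r
  proof -
    have r: "r \<in> {0<..<T1}" using that dT1 by auto
    have "(\<phi>1 has_real_derivative (r powr (- A) * (- B * g r - C * r powr A) + (- A) * r powr (- A - 1) * g r)) (at r)"
      unfolding \<phi>1_def
      by (rule DERIV_mult'[OF has_real_derivative_powr gder[OF r]]) (use that in auto)
    moreover have "r powr (- A) * (- B * g r - C * r powr A) + (- A) * r powr (- A - 1) * g r = \<phi>2 r"
    proof -
      have e1: "r powr (- A - 1) = r powr (- A) / r" using that by (simp add: powr_diff)
      have e2: "r powr (- A) * r powr A = 1" using that by (simp add: powr_minus)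
      show ?thesis unfolding \<phi>2_def \<phi>1_def e1 using e2 that
        by (simp add: field_simps)
    qed
    ultimately show ?thesis by simp
  qed
  have \<phi>1cont: "continuous_on {0<..\<delta>} \<phi>1"
    using \<phi>1der DERIV_isCont continuous_at_imp_continuous_on by blast
  have \<phi>2cont: "continuous_on {0<..\<delta>} \<phi>2"
    unfolding \<phi>2_def by (intro continuous_intros \<phi>1cont) auto
  have \<phi>1pos: "\<phi>1 r > 0" if "r \<in> {0<..\<delta>}" for r
    unfolding \<phi>1_def using gm[of r] m0 that by auto
  define h where "h u = g (u powr p)" for u
  have hcont: "continuous_on {0..T2} h"
  proof -
    have "continuous_on {0..T2} (\<lambda>u. u powr p)"
      using p0 by (intro continuous_on_powr' continuous_intros) auto
    moreover have "(\<lambda>u. u powr p) ` {0..T2} \<subseteq> {0..T1}"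
      unfolding T1_def using p0 by (auto intro!: powr_mono2)
    ultimately show ?thesis unfolding h_def
      using continuous_on_compose2[OF gcont] by blast
  qed
  define H where "H x = integral {0..x} h" for x
  have Hwithin: "(H has_real_derivative h x) (at x within {0..T2})" if "x \<in> {0..T2}" for x
    unfolding H_def by (rule integral_has_real_derivative[OF hcont that])
  have Hcont: "continuous_on {0..T2} H"
    using Hwithin DERIV_continuous continuous_on_eq_continuous_within by blast
  have hint: "h integrable_on {0..x}" if "x \<le> T2" for x
    by (rule integrable_continuous_interval) (use continuous_on_subset[OF hcont] that in auto)
  have hbounds: "m \<le> h u \<and> h u \<le> K" if "0 \<le> u" "u \<le> \<delta> powr (1 - A)" for u
  proof -
    have "u powr p \<le> \<delta>" using powr_mono2[OF _ that, of p] p0 dpp[of \<delta>] d0 by simp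
    then show ?thesis unfolding h_def using gm gK by simp
  qed
  have Hlow: "H x \<ge> m * x" and Hup: "H x \<le> K * x" if "0 \<le> x" "x \<le> \<delta> powr (1 - A)" for x
  proof -
    have xT: "x \<le> T2" using that by (simp add: T2_def)
    have "integral {0..x} (\<lambda>_. m) \<le> integral {0..x} h"
      by (rule integral_le) (use hint[OF xT] hbounds that in auto)
    then show "H x \<ge> m * x" using that by (simp add: H_def mult.commute)
    have "integral {0..x} h \<le> integral {0..x} (\<lambda>_. K)"
      by (rule integral_le) (use hint[OF xT] hbounds that in auto)
    then show "H x \<le> K * x" using that by (simp add: H_def mult.commute)
  qed
  define \<phi> where "\<phi> r = p * H (r powr (1 - A))" for r
  have \<phi>cont: "continuous_on {0..\<delta>} \<phi>"
  proof -
    have "continuous_on {0..\<delta>} (\<lambda>r. r powr (1 - A))"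
      using A1 by (intro continuous_on_powr' continuous_intros) auto
    moreover have "(\<lambda>r. r powr (1 - A)) ` {0..\<delta>} \<subseteq> {0..T2}"
      unfolding T2_def using A1 by (auto intro!: powr_mono2 order.trans[OF _ less_imp_le[OF less_add_one]])
    ultimately have "continuous_on {0..\<delta>} (\<lambda>r. H (r powr (1 - A)))"
      using continuous_on_compose2[OF Hcont] by blast
    then show ?thesis unfolding \<phi>_def by (intro continuous_intros)
  qed
  have \<phi>der: "(\<phi> has_real_derivative \<phi>1 r) (at r)" if "r \<in> {0<..\<delta>}" for r
  proof -
    have x: "r powr (1 - A) \<in> {0<..<T2}"
      using that A1 powr_mono2[of "1 - A" r \<delta>] by (auto simp: T2_def)
    have Hd: "(H has_real_derivative h (r powr (1 - A))) (at (r powr (1 - A)))"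
      using Hwithin[of "r powr (1 - A)"] x at_within_interior[of "r powr (1 - A)" "{0..T2}"] by auto
    have "((\<lambda>r. H (r powr (1 - A))) has_real_derivative h (r powr (1 - A)) * ((1 - A) * r powr (1 - A - 1))) (at r)"
      by (rule DERIV_chain2[OF Hd has_real_derivative_powr]) (use that in auto)
    then have "(\<phi> has_real_derivative p * (h (r powr (1 - A)) * ((1 - A) * r powr (1 - A - 1)))) (at r)"
      unfolding \<phi>_def by (rule DERIV_cmult)
    moreover have "p * (h (r powr (1 - A)) * ((1 - A) * r powr (1 - A - 1))) = \<phi>1 r"
    proof -
      have "h (r powr (1 - A)) = g r" unfolding h_def using dpp[of r] that by simp
      moreover have "p * (g r * ((1 - A) * r powr (1 - A - 1))) = (p * (1 - A)) * (r powr (- A) * g r)"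
        by (simp add: algebra_simps)
      ultimately show ?thesis unfolding \<phi>1_def using p1 by simp
    qed
    ultimately show ?thesis by simp
  qed
  show ?thesis
  proof (intro exI conjI ballI)
    show "continuous_on {0..\<delta>} \<phi>" by (rule \<phi>cont)
    show "continuous_on {0<..\<delta>} \<phi>2" by (rule \<phi>2cont)
    fix r assume r: "r \<in> {0<..\<delta>}"
    show "(\<phi> has_real_derivative \<phi>1 r) (at r within {0<..\<delta>})"
      using \<phi>der[OF r] by (rule has_field_derivative_at_within)
    show "(\<phi>1 has_real_derivative \<phi>2 r) (at r within {0<..\<delta>})"
      using \<phi>1der[OF r] by (rule has_field_derivative_at_within)
    have xr: "0 < r powr (1 - A)" "r powr (1 - A) \<le> \<delta> powr (1 - A)"
      using r A1 powr_mono2[of "1 - A" r \<delta>] by auto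
    show "\<phi> r > 0" unfolding \<phi>_def using Hlow[of "r powr (1 - A)"] xr m0 p0
      by (smt (verit) mult_pos_pos)
    show "\<phi>2 r + (A / r + B) * \<phi>1 r = - C" unfolding \<phi>2_def by simp
    have q: "(A / r + B) * \<phi>1 r > 0" using \<phi>1pos[OF r] r A0 B0 by (intro mult_pos_pos add_pos_nonneg) auto
    show "\<phi>1 r > 0" by (rule \<phi>1pos[OF r])
    show "\<phi>2 r < 0" unfolding \<phi>2_def using q C0 by simp
    show "\<phi>2 r - \<phi>1 r / r \<le> - C" unfolding \<phi>2_def using q divide_pos_pos[OF \<phi>1pos[OF r], of r] r
      by auto
  next
    show "\<phi> \<delta> \<ge> D" unfolding \<phi>_def using Hlow[of "\<delta> powr (1 - A)"] mD p0 d0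
      by (smt (verit) mult_left_mono mult.commute mult.left_commute powr_ge_zero)
  next
    show "bdd_above ((\<lambda>r. \<phi> r / r powr (1 - A)) ` {0<..\<delta>})"
    proof (rule bdd_aboveI2)
      fix r :: real assume r: "r \<in> {0<..\<delta>}"
      have xr: "0 < r powr (1 - A)" "r powr (1 - A) \<le> \<delta> powr (1 - A)"
        using r A1 powr_mono2[of "1 - A" r \<delta>] by auto
      have "\<phi> r \<le> p * K * r powr (1 - A)" unfolding \<phi>_def
        using Hup[of "r powr (1 - A)"] xr p0 by (simp add: mult_left_mono)
      then show "\<phi> r / r powr (1 - A) \<le> p * K" using xr by (simp add: divide_le_eq)
    qed
  qed
qed

end
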